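(* Let $f(t)=-27(t^2-t+1)$ and $g(t)=-27(2t^3-3t^2-3t+2)$. If $E/\mathbb{Q}$ is an elliptic curve such that $\mathbb{Z}/2\mathbb{Z}\times\mathbb{Z}/2\mathbb{Z}$ embeds into $E_{\mathrm{tors}}(\mathbb{Q})$ and $j(E)\ne0,1728$, then $E$ is $\mathbb{Q}$-isomorphic to an element of $\mathcal{G}$. Moreover, for every $E\in\mathcal{G}$ with $j(E)\ne0,1728$, the fibre of the map $\mathcal{G}\to\mathcal{G}/{\cong_{\mathbb{Q}}}$ containing $E$ has size $6$.
   Context: $\mathcal{E}_t:y^2=x^3+f(t)x+g(t)$ for $t\in\mathbb{Q}$, and $\mathcal{E}_t^d$ is its quadratic twist by $d$. $\mathcal{G}=\{\mathcal{E}_t^d:t\in\mathbb{Q},\ d\in\mathbb{Z}\text{ squarefree},\ \mathrm{Disc}(\mathcal{E}_t^d)\ne0\}$ is regarded as a multiset indexed by the pairs $(t,d)$ (distinct pairs give distinct elements), and $\mathcal{G}\to\mathcal{G}/{\cong_{\mathbb{Q}}}$ sends an element to its $\mathbb{Q}$-isomorphism class. *)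

theory Defs
  imports Complex_Main "HOL-Computational_Algebra.Squarefree"
begin

text \<open>Elliptic curves over Q in short Weierstrass form y^2 = x^3 + A x + B,
  encoded by the coefficient pair (A, B).\<close>

definition ec_disc :: "rat \<Rightarrow> rat \<Rightarrow> rat" where
  "ec_disc A B = -16 * (4 * A^3 + 27 * B^2)"

definition j_inv :: "rat \<Rightarrow> rat \<Rightarrow> rat" where
  "j_inv A B = 1728 * (4 * A^3) / (4 * A^3 + 27 * B^2)"

text \<open>Q-isomorphism of short Weierstrass models: (x,y) = (u^2 x', u^3 y').\<close>
definition iso_Q :: "rat \<times> rat \<Rightarrow> rat \<times> rat \<Rightarrow> bool" where
  "iso_Q E E' \<longleftrightarrow> (\<exists>u::rat. u \<noteq> 0 \<and> fst E' = u^4 * fst E \<and> snd E' = u^6 * snd E)"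

datatype ec_point = Inf | Pt rat rat

definition on_curve :: "rat \<times> rat \<Rightarrow> ec_point \<Rightarrow> bool" where
  "on_curve E P = (case P of Inf \<Rightarrow> True
      | Pt x y \<Rightarrow> y^2 = x^3 + fst E * x + snd E)"

definition ec_add :: "rat \<times> rat \<Rightarrow> ec_point \<Rightarrow> ec_point \<Rightarrow> ec_point" where
  "ec_add E P Q = (case P of Inf \<Rightarrow> Q | Pt x1 y1 \<Rightarrow>
     (case Q of Inf \<Rightarrow> P | Pt x2 y2 \<Rightarrow>
       (if x1 = x2 \<and> y1 = - y2 then Inf
        else let l = (if x1 = x2 then (3 * x1^2 + fst E) / (2 * y1)
                      else (y2 - y1) / (x2 - x1));
                 x3 = l^2 - x1 - x2
             in Pt x3 (l * (x1 - x3) - y1))))"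

fun ec_smul :: "rat \<times> rat \<Rightarrow> nat \<Rightarrow> ec_point \<Rightarrow> ec_point" where
  "ec_smul E 0 P = Inf"
| "ec_smul E (Suc n) P = ec_add E P (ec_smul E n P)"

definition tors_pt :: "rat \<times> rat \<Rightarrow> ec_point \<Rightarrow> bool" where
  "tors_pt E P \<longleftrightarrow> on_curve E P \<and> (\<exists>n>0. ec_smul E n P = Inf)"

text \<open>Z/2Z x Z/2Z realised as bool x bool with componentwise xor.\<close>
definition klein_add :: "bool \<times> bool \<Rightarrow> bool \<times> bool \<Rightarrow> bool \<times> bool" where
  "klein_add a b = (fst a \<noteq> fst b, snd a \<noteq> snd b)"

definition klein_embeds_tors :: "rat \<times> rat \<Rightarrow> bool" where
  "klein_embeds_tors E \<longleftrightarrow> (\<exists>\<phi> :: bool \<times> bool \<Rightarrow> ec_point.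
      inj \<phi> \<and> (\<forall>a. tors_pt E (\<phi> a)) \<and>
      (\<forall>a b. \<phi> (klein_add a b) = ec_add E (\<phi> a) (\<phi> b)))"

definition ff :: "rat \<Rightarrow> rat" where
  "ff t = -27 * (t^2 - t + 1)"

definition gg :: "rat \<Rightarrow> rat" where
  "gg t = -27 * (2 * t^3 - 3 * t^2 - 3 * t + 2)"

definition Etd :: "rat \<Rightarrow> int \<Rightarrow> rat \<times> rat" where
  "Etd t d = (of_int d ^ 2 * ff t, of_int d ^ 3 * gg t)"

text \<open>The index set of the multiset G.\<close>
definition G_idx :: "(rat \<times> int) set" where
  "G_idx = {(t, d). squarefree d \<and> ec_disc (fst (Etd t d)) (snd (Etd t d)) \<noteq> 0}"

end

theory Submission imports Defs begin

lemma sqf_unique_int: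
  fixes e1 e2 m n :: int
  assumes s1: "squarefree e1" and s2: "squarefree e2" and m: "m \<noteq> 0" and n: "n \<noteq> 0"
    and eq: "e1 * m^2 = e2 * n^2"
  shows "e1 = e2"
proof -
  have e1: "e1 \<noteq> 0" and e2: "e2 \<noteq> 0" using s1 s2 by auto
  have mm: "multiplicity p e1 = multiplicity p e2" if p: "prime p" for p :: int
  proof -
    have pe: "prime_elem p" using p by (rule prime_imp_prime_elem)
    have "multiplicity p (e1 * m^2) = multiplicity p (e2 * n^2)" using eq by simp
    hence "multiplicity p e1 + 2 * multiplicity p m = multiplicity p e2 + 2 * multiplicity p n"
      using pe e1 e2 m n by (simp add: prime_elem_multiplicity_mult_distrib prime_elem_multiplicity_power_distrib)
    moreover have "multiplicity p e1 \<le> 1"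
      using s1 p by (simp add: squarefree_factorial_semiring''[OF e1])
    moreover have "multiplicity p e2 \<le> 1"
      using s2 p by (simp add: squarefree_factorial_semiring''[OF e2])
    ultimately show "multiplicity p e1 = multiplicity p e2" by presburger
  qed
  have "normalize e1 = normalize e2" by (rule multiplicity_eq_imp_eq[OF e1 e2 mm])
  hence "\<bar>e1\<bar> = \<bar>e2\<bar>" by simp
  moreover have "sgn e1 = sgn e2"
  proof -
    have "sgn (e1 * m^2) = sgn (e2 * n^2)" using eq by simp
    moreover have "sgn (m^2) = 1" "sgn (n^2) = 1" using m n by (simp_all add: sgn_if)
    ultimately show ?thesis by (simp add: sgn_mult)
  qed
  ultimately show ?thesis by (metis sgn_mult_abs)
qed

lemma rat_int_frac: obtains a b :: int where "b \<noteq> 0" "(v::rat) = of_int a / of_int b"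
proof -
  obtain a b where q: "quotient_of v = (a,b)" by (cases "quotient_of v")
  have "v = of_int a / of_int b" using quotient_of_div[OF q] .
  moreover have "b > 0" using quotient_of_denom_pos[OF q] .
  ultimately show ?thesis using that[of b a] by auto
qed

lemma sqf_unique:
  fixes e1 e2 :: int and v w :: rat
  assumes s1: "squarefree e1" and s2: "squarefree e2" and v: "v \<noteq> 0" and w: "w \<noteq> 0"
    and eq: "of_int e1 * v^2 = of_int e2 * w^2"
  shows "e1 = e2"
proof -
  obtain a b :: int where b: "b \<noteq> 0" and vab: "v = of_int a / of_int b" by (rule rat_int_frac)
  obtain c d :: int where d: "d \<noteq> 0" and wcd: "w = of_int c / of_int d" by (rule rat_int_frac)
  have a: "a \<noteq> 0" using v vab by auto
  have c: "c \<noteq> 0" using w wcd by auto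
  have "of_int e1 * (of_int a / of_int b)^2 = (of_int e2 * (of_int c / of_int d)^2 :: rat)"
    using eq unfolding vab wcd .
  hence "of_int e1 * (of_int a)^2 * (of_int d)^2 = (of_int e2 * (of_int c)^2 * (of_int b)^2 :: rat)"
    using b d by (simp add: power_divide divide_simps)
  hence "of_int (e1 * (a*d)^2) = (of_int (e2 * (c*b)^2) :: rat)"
    by (simp add: power_mult_distrib mult.assoc mult.left_commute)
  hence eqi: "e1 * (a*d)^2 = e2 * (c*b)^2" by (simp only: of_int_eq_iff)
  have "a*d \<noteq> 0" "c*b \<noteq> 0" using a b c d by auto
  thus ?thesis using sqf_unique_int[OF s1 s2 _ _ eqi] by blast
qed

definition sqf :: "rat \<Rightarrow> int" where
  "sqf r = (SOME e. squarefree e \<and> (\<exists>v. v \<noteq> 0 \<and> r = v^2 * of_int e))"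

lemma sqf_exists:
  fixes r :: rat
  assumes "r \<noteq> 0"
  shows "\<exists>e. squarefree e \<and> (\<exists>v. v \<noteq> 0 \<and> r = v^2 * of_int e)"
proof -
  obtain a b :: int where b: "b \<noteq> 0" and r: "r = of_int a / of_int b" by (rule rat_int_frac)
  have a: "a \<noteq> 0" using assms r by auto
  define n where "n = a * b"
  have n: "n = squarefree_part n * square_part n ^ 2" by (rule squarefree_decompose)
  have sq: "square_part n \<noteq> 0" using a b n_def by simp
  have "r = of_int n / (of_int b)^2" using b r n_def by (simp add: power2_eq_square)
  also have "\<dots> = (of_int (square_part n) / of_int b)^2 * of_int (squarefree_part n)"
    by (subst n) (simp add: power_divide field_simps)
  finally show ?thesis using sq b
    by (intro exI[of _ "squarefree_part n"] conjI squarefree_squarefree_part exI[of _ "of_int (square_part n) / of_int b"]) auto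
qed

lemma sqf_prop:
  assumes "r \<noteq> 0"
  shows "squarefree (sqf r) \<and> (\<exists>v. v \<noteq> 0 \<and> r = v^2 * of_int (sqf r))"
  unfolding sqf_def by (rule someI_ex[OF sqf_exists[OF assms]])

lemma sqf_eq:
  assumes "squarefree e" "v \<noteq> 0" "r = v^2 * of_int e"
  shows "sqf r = e"
proof -
  have r: "r \<noteq> 0" using assms by auto
  obtain w where w: "w \<noteq> 0" "r = w^2 * of_int (sqf r)" using sqf_prop[OF r] by blast
  have "w^2 * of_int (sqf r) = v^2 * of_int e" using w(2)[symmetric] assms(3) by (rule trans)
  hence eq: "of_int (sqf r) * w^2 = of_int e * v^2" by (simp add: mult.commute)
  have sq: "squarefree (sqf r)" using sqf_prop[OF r] by blast
  show ?thesis by (rule sqf_unique[OF sq assms(1) w(1) assms(2) eq])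
qed


lemma disc_Etd: "ec_disc (fst (Etd t d)) (snd (Etd t d)) = 8503056 * (of_int d)^6 * t^2 * (t-1)^2"
  unfolding ec_disc_def Etd_def ff_def gg_def by simp algebra

lemma G_idx_iff: "(t, d) \<in> G_idx \<longleftrightarrow> squarefree d \<and> t \<noteq> 0 \<and> t \<noteq> 1"
proof -
  have "squarefree d \<Longrightarrow> d \<noteq> 0" by auto
  thus ?thesis unfolding G_idx_def by (auto simp: disc_Etd)
qed

lemma key:
  fixes s t w :: rat
  assumes w: "w \<noteq> 0" and s0: "s \<noteq> 0" and t0: "t \<noteq> 0" and t1: "t \<noteq> 1"
    and hf: "t^2-t+1 = w^2*(s^2-s+1)"
    and hg: "2*t^3-3*t^2-3*t+2 = w^3*(2*s^3-3*s^2-3*s+2)"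
  shows "(w=1 \<and> s=t) \<or> (w=-1 \<and> s=1-t) \<or> (w=1-t \<and> s=t/(t-1)) \<or> (w=t-1 \<and> s=1/(1-t))
     \<or> (w=-t \<and> s=(t-1)/t) \<or> (w=t \<and> s=1/t)"
proof -
  define a where "a = w*(2*s-1)"
  define b where "b = -w*(s+1)"
  have P: "(x-(2*t-1))*(x+(t+1))*(x-(2-t)) = x^3 - 3*(t^2-t+1)*x - (2*t^3-3*t^2-3*t+2)" for x
    by algebra
  have "(a-(2*t-1))*(a+(t+1))*(a-(2-t)) = 0"
    unfolding P hf hg a_def by algebra
  hence ha: "a = 2*t-1 \<or> a = -(t+1) \<or> a = 2-t" by auto
  have "(b-(2*t-1))*(b+(t+1))*(b-(2-t)) = 0"
    unfolding P hf hg b_def by algebra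
  hence hb: "b = 2*t-1 \<or> b = -(t+1) \<or> b = 2-t" by auto
  have W: "w = -(a+2*b)/3" unfolding a_def b_def by algebra
  have WS: "w*s = (a-b)/3" unfolding a_def b_def by algebra
  have ab: "a \<noteq> b" using WS w s0 by auto
  have S: "s = (a-b)/(-(a+2*b))" using WS W w by (simp add: field_simps)
  have tm: "1 - t \<noteq> 0" "t - 1 \<noteq> 0" using t1 by auto
  from ha hb ab show ?thesis
  proof (elim disjE)
  qed (simp_all add: W S tm t0 divide_simps, (simp_all add: algebra_simps)?)
qed



definition six :: "rat \<Rightarrow> rat \<Rightarrow> rat \<Rightarrow> bool" where
  "six t w s \<longleftrightarrow> (w=1 \<and> s=t) \<or> (w=-1 \<and> s=1-t) \<or> (w=1-t \<and> s=t/(t-1)) \<or> (w=t-1 \<and> s=1/(1-t))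
     \<or> (w=-t \<and> s=(t-1)/t) \<or> (w=t \<and> s=1/t)"

lemma cf0: assumes "t \<noteq> 0" "t \<noteq> 1" shows "ff t = (1)^2 * ff (t)"
proof -
  have "1 - t \<noteq> 0" "t - 1 \<noteq> 0" using assms by auto
  thus ?thesis using assms unfolding ff_def by (simp add: divide_simps) algebra?
qed
lemma cg0: assumes "t \<noteq> 0" "t \<noteq> 1" shows "gg t = (1)^3 * gg (t)"
proof -
  have "1 - t \<noteq> 0" "t - 1 \<noteq> 0" using assms by auto
  thus ?thesis using assms unfolding gg_def by (simp add: divide_simps) algebra?
qed
lemma cf1: assumes "t \<noteq> 0" "t \<noteq> 1" shows "ff t = (-1)^2 * ff (1-t)"
proof -
  have "1 - t \<noteq> 0" "t - 1 \<noteq> 0" using assms by auto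
  thus ?thesis using assms unfolding ff_def by (simp add: divide_simps) algebra?
qed
lemma cg1: assumes "t \<noteq> 0" "t \<noteq> 1" shows "gg t = (-1)^3 * gg (1-t)"
proof -
  have "1 - t \<noteq> 0" "t - 1 \<noteq> 0" using assms by auto
  thus ?thesis using assms unfolding gg_def by (simp add: divide_simps) algebra?
qed
lemma cf2: assumes "t \<noteq> 0" "t \<noteq> 1" shows "ff t = (1-t)^2 * ff (t/(t-1))"
proof -
  have "1 - t \<noteq> 0" "t - 1 \<noteq> 0" using assms by auto
  thus ?thesis using assms unfolding ff_def by (simp add: divide_simps) algebra?
qed
lemma cg2: assumes "t \<noteq> 0" "t \<noteq> 1" shows "gg t = (1-t)^3 * gg (t/(t-1))"
proof -
  have "1 - t \<noteq> 0" "t - 1 \<noteq> 0" using assms by auto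
  thus ?thesis using assms unfolding gg_def by (simp add: divide_simps) algebra?
qed
lemma cf3: assumes "t \<noteq> 0" "t \<noteq> 1" shows "ff t = (t-1)^2 * ff (1/(1-t))"
proof -
  have "1 - t \<noteq> 0" "t - 1 \<noteq> 0" using assms by auto
  thus ?thesis using assms unfolding ff_def by (simp add: divide_simps) algebra?
qed
lemma cg3: assumes "t \<noteq> 0" "t \<noteq> 1" shows "gg t = (t-1)^3 * gg (1/(1-t))"
proof -
  have "1 - t \<noteq> 0" "t - 1 \<noteq> 0" using assms by auto
  thus ?thesis using assms unfolding gg_def by (simp add: divide_simps) algebra?
qed
lemma cf4: assumes "t \<noteq> 0" "t \<noteq> 1" shows "ff t = (-t)^2 * ff ((t-1)/t)"
proof -
  have "1 - t \<noteq> 0" "t - 1 \<noteq> 0" using assms by auto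
  thus ?thesis using assms unfolding ff_def by (simp add: divide_simps) algebra?
qed
lemma cg4: assumes "t \<noteq> 0" "t \<noteq> 1" shows "gg t = (-t)^3 * gg ((t-1)/t)"
proof -
  have "1 - t \<noteq> 0" "t - 1 \<noteq> 0" using assms by auto
  thus ?thesis using assms unfolding gg_def by (simp add: divide_simps) algebra?
qed
lemma cf5: assumes "t \<noteq> 0" "t \<noteq> 1" shows "ff t = (t)^2 * ff (1/t)"
proof -
  have "1 - t \<noteq> 0" "t - 1 \<noteq> 0" using assms by auto
  thus ?thesis using assms unfolding ff_def by (simp add: divide_simps) algebra?
qed
lemma cg5: assumes "t \<noteq> 0" "t \<noteq> 1" shows "gg t = (t)^3 * gg (1/t)"
proof -
  have "1 - t \<noteq> 0" "t - 1 \<noteq> 0" using assms by auto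
  thus ?thesis using assms unfolding gg_def by (simp add: divide_simps) algebra?
qed

lemma conv:
  assumes t0: "t \<noteq> 0" and t1: "t \<noteq> 1" and h: "six t w s"
  shows "ff t = w^2 * ff s \<and> gg t = w^3 * gg s \<and> w \<noteq> 0 \<and> s \<noteq> 0 \<and> s \<noteq> 1"
proof -
  have tm: "1 - t \<noteq> 0" "t - 1 \<noteq> 0" using t1 by auto
  from h[unfolded six_def] show ?thesis
  proof (elim disjE conjE)
    assume "w = 1" "s = t" thus ?thesis using t0 t1 by simp
  next
    assume a: "w = -1" "s = 1-t"
    have "s \<noteq> 0 \<and> s \<noteq> 1" unfolding a using t0 t1 tm by (simp add: divide_simps)
    moreover have "w \<noteq> 0" unfolding a using t0 t1 tm by simp
    ultimately show ?thesis unfolding a using cf1[OF t0 t1] cg1[OF t0 t1] by simp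
  next
    assume a: "w = 1-t" "s = t/(t-1)"
    have "s \<noteq> 0 \<and> s \<noteq> 1" unfolding a using t0 t1 tm by (simp add: divide_simps)
    moreover have "w \<noteq> 0" unfolding a using t0 t1 tm by simp
    ultimately show ?thesis unfolding a using cf2[OF t0 t1] cg2[OF t0 t1] by simp
  next
    assume a: "w = t-1" "s = 1/(1-t)"
    have "s \<noteq> 0 \<and> s \<noteq> 1" unfolding a using t0 t1 tm by (simp add: divide_simps)
    moreover have "w \<noteq> 0" unfolding a using t0 t1 tm by simp
    ultimately show ?thesis unfolding a using cf3[OF t0 t1] cg3[OF t0 t1] by simp
  next
    assume a: "w = -t" "s = (t-1)/t"
    have "s \<noteq> 0 \<and> s \<noteq> 1" unfolding a using t0 t1 tm by (simp add: divide_simps)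
    moreover have "w \<noteq> 0" unfolding a using t0 t1 tm by simp
    ultimately show ?thesis unfolding a using cf4[OF t0 t1] cg4[OF t0 t1] by simp
  next
    assume a: "w = t" "s = 1/t"
    have "s \<noteq> 0 \<and> s \<noteq> 1" unfolding a using t0 t1 tm by (simp add: divide_simps)
    moreover have "w \<noteq> 0" unfolding a using t0 t1 tm by simp
    ultimately show ?thesis unfolding a using cf5[OF t0 t1] cg5[OF t0 t1] by simp
  qed
qed

lemma dist6:
  fixes t :: rat
  assumes "t \<noteq> 0" "t \<noteq> 1" "2*t \<noteq> 1" "t \<noteq> -1" "t \<noteq> 2"
  shows "distinct [t, 1-t, t/(t-1), 1/(1-t), (t-1)/t, 1/t]"
proof -
  have q: "t*t - t + 1 \<noteq> 0"
  proof -
    have "t*t - t + 1 = (t - 1/2)^2 + 3/4" by (simp add: power2_eq_square algebra_simps)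
    also have "\<dots> > 0" by (simp add: add_nonneg_pos)
    finally show ?thesis by simp
  qed
  have tm: "1 - t \<noteq> 0" "t - 1 \<noteq> 0" using assms by auto
  have "(t-1)*(t+1) \<noteq> 0" using assms by auto
  hence q2: "t*t \<noteq> 1" by (simp add: algebra_simps)
  have d01: "t \<noteq> 1-t" using assms q tm q2 by (simp add: divide_simps) (simp add: algebra_simps)?
  have d02: "t \<noteq> t/(t-1)" using assms q tm q2 by (simp add: divide_simps) (simp add: algebra_simps)?
  have d03: "t \<noteq> 1/(1-t)" using assms q tm q2 by (simp add: divide_simps) (simp add: algebra_simps)?
  have d04: "t \<noteq> (t-1)/t" using assms q tm q2 by (simp add: divide_simps) (simp add: algebra_simps)?
  have d05: "t \<noteq> 1/t" using assms q tm q2 by (simp add: divide_simps) (simp add: algebra_simps)?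
  have d12: "1-t \<noteq> t/(t-1)" using assms q tm q2 by (simp add: divide_simps) (simp add: algebra_simps)?
  have d13: "1-t \<noteq> 1/(1-t)" using assms q tm q2 by (simp add: divide_simps) (simp add: algebra_simps)?
  have d14: "1-t \<noteq> (t-1)/t" using assms q tm q2 by (simp add: divide_simps) (simp add: algebra_simps)?
  have d15: "1-t \<noteq> 1/t" using assms q tm q2 by (simp add: divide_simps) (simp add: algebra_simps)?
  have d23: "t/(t-1) \<noteq> 1/(1-t)" using assms q tm q2 by (simp add: divide_simps) (simp add: algebra_simps)?
  have d24: "t/(t-1) \<noteq> (t-1)/t" using assms q tm q2 by (simp add: divide_simps) (simp add: algebra_simps)?
  have d25: "t/(t-1) \<noteq> 1/t" using assms q tm q2 by (simp add: divide_simps) (simp add: algebra_simps)?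
  have d34: "1/(1-t) \<noteq> (t-1)/t" using assms q tm q2 by (simp add: divide_simps) (simp add: algebra_simps)?
  have d35: "1/(1-t) \<noteq> 1/t" using assms q tm q2 by (simp add: divide_simps) (simp add: algebra_simps)?
  have d45: "(t-1)/t \<noteq> 1/t" using assms q tm q2 by (simp add: divide_simps) (simp add: algebra_simps)?
  show ?thesis using d01 d02 d03 d04 d05 d12 d13 d14 d15 d23 d24 d25 d34 d35 d45 by simp
qed

lemma card6:
  assumes "distinct [a1,a2,a3,a4,a5,a6]"
  shows "card {(a1,b1),(a2,b2),(a3,b3),(a4,b4),(a5,b5),(a6,b6)} = 6"
  using assms by simp


lemma fiber_mem:
  assumes p: "(t,d) \<in> G_idx"
  shows "((s,e) \<in> G_idx \<and> iso_Q (Etd s e) (Etd t d)) \<longleftrightarrow> (\<exists>w. six t w s \<and> e = sqf (w * of_int d))"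
proof -
  have sd: "squarefree d" and t0: "t \<noteq> 0" and t1: "t \<noteq> 1" using p by (auto simp: G_idx_iff)
  have d0: "(of_int d :: rat) \<noteq> 0" using sd by auto
  show ?thesis
  proof
    assume "(s,e) \<in> G_idx \<and> iso_Q (Etd s e) (Etd t d)"
    hence q: "(s,e) \<in> G_idx" and iso: "iso_Q (Etd s e) (Etd t d)" by auto
    have se: "squarefree e" and s0: "s \<noteq> 0" and s1: "s \<noteq> 1" using q by (auto simp: G_idx_iff)
    have e0: "(of_int e :: rat) \<noteq> 0" using se by auto
    obtain u where u: "u \<noteq> 0" and eqf: "(of_int d)^2 * ff t = u^4 * ((of_int e)^2 * ff s)"
      and eqg: "(of_int d)^3 * gg t = u^6 * ((of_int e)^3 * gg s)"
      using iso unfolding iso_Q_def Etd_def by auto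
    define w where "w = u^2 * of_int e / of_int d"
    have w0: "w \<noteq> 0" using u e0 d0 by (simp add: w_def)
    have "w^2 * ff s = (u^4 * ((of_int e)^2 * ff s)) / (of_int d)^2"
      by (simp add: w_def power_divide power_mult_distrib field_simps)
    also have "\<dots> = ff t" using eqf[symmetric] d0 by simp
    finally have ffe: "ff t = w^2 * ff s" by simp
    have "w^3 * gg s = (u^6 * ((of_int e)^3 * gg s)) / (of_int d)^3"
      by (simp add: w_def power_divide power_mult_distrib field_simps)
    also have "\<dots> = gg t" using eqg[symmetric] d0 by simp
    finally have gge: "gg t = w^3 * gg s" by simp
    have hf: "t^2-t+1 = w^2*(s^2-s+1)" using ffe unfolding ff_def by algebra
    have hg: "2*t^3-3*t^2-3*t+2 = w^3*(2*s^3-3*s^2-3*s+2)" using gge unfolding gg_def by algebra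
    have "six t w s" unfolding six_def by (rule key[OF w0 s0 t0 t1 hf hg])
    moreover have "sqf (w * of_int d) = e"
      by (rule sqf_eq[OF se u]) (use d0 in \<open>simp add: w_def\<close>)
    ultimately show "\<exists>w. six t w s \<and> e = sqf (w * of_int d)" by auto
  next
    assume "\<exists>w. six t w s \<and> e = sqf (w * of_int d)"
    then obtain w where h: "six t w s" and e: "e = sqf (w * of_int d)" by auto
    have ffe: "ff t = w^2 * ff s" and gge: "gg t = w^3 * gg s" and w0: "w \<noteq> 0"
      and s0: "s \<noteq> 0" and s1: "s \<noteq> 1" using conv[OF t0 t1 h] by auto
    have wd: "w * of_int d \<noteq> 0" using w0 d0 by simp
    have se: "squarefree e" using sqf_prop[OF wd] e by simp
    obtain v where v: "v \<noteq> 0" and wdv: "w * of_int d = v^2 * of_int e" using sqf_prop[OF wd] e by auto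
    have "v^4 * ((of_int e)^2 * ff s) = (v^2 * of_int e)^2 * ff s" by algebra
    also have "\<dots> = (of_int d)^2 * (w^2 * ff s)" unfolding wdv[symmetric] by algebra
    finally have X: "v^4 * ((of_int e)^2 * ff s) = (of_int d)^2 * (w^2 * ff s)" .
    have f1: "(of_int d)^2 * ff t = v^4 * ((of_int e)^2 * ff s)" by (simp only: X ffe)
    have "v^6 * ((of_int e)^3 * gg s) = (v^2 * of_int e)^3 * gg s" by algebra
    also have "\<dots> = (of_int d)^3 * (w^3 * gg s)" unfolding wdv[symmetric] by algebra
    finally have Y: "v^6 * ((of_int e)^3 * gg s) = (of_int d)^3 * (w^3 * gg s)" .
    have g1: "(of_int d)^3 * gg t = v^6 * ((of_int e)^3 * gg s)" by (simp only: Y gge)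
    have "iso_Q (Etd s e) (Etd t d)" unfolding iso_Q_def Etd_def using v f1 g1 by auto
    moreover have "(s,e) \<in> G_idx" using se s0 s1 by (simp add: G_idx_iff)
    ultimately show "(s,e) \<in> G_idx \<and> iso_Q (Etd s e) (Etd t d)" by simp
  qed
qed

lemma fiber_eq:
  assumes p: "(t,d) \<in> G_idx"
  shows "{q \<in> G_idx. iso_Q (Etd (fst q) (snd q)) (Etd t d)} =
    {(t, sqf (1 * of_int d)), (1-t, sqf (-1 * of_int d)), (t/(t-1), sqf ((1-t) * of_int d)),
     (1/(1-t), sqf ((t-1) * of_int d)), ((t-1)/t, sqf (-t * of_int d)), (1/t, sqf (t * of_int d))}"
proof (rule set_eqI)
  fix q :: "rat \<times> int"
  obtain s e where q: "q = (s,e)" by (cases q)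
  have "(\<exists>w. six t w s \<and> e = sqf (w * of_int d)) \<longleftrightarrow>
     (s = t \<and> e = sqf (1 * of_int d)) \<or> (s = 1-t \<and> e = sqf (-1 * of_int d)) \<or> (s = t/(t-1) \<and> e = sqf ((1-t) * of_int d)) \<or>
     (s = 1/(1-t) \<and> e = sqf ((t-1) * of_int d)) \<or> (s = (t-1)/t \<and> e = sqf (-t * of_int d)) \<or> (s = 1/t \<and> e = sqf (t * of_int d))"
    unfolding six_def by (simp only: conj_disj_distribR ex_disj_distrib conj_assoc) (simp only: ex_simps simp_thms)
  thus "q \<in> {q \<in> G_idx. iso_Q (Etd (fst q) (snd q)) (Etd t d)} \<longleftrightarrow> q \<in>
    {(t, sqf (1 * of_int d)), (1-t, sqf (-1 * of_int d)), (t/(t-1), sqf ((1-t) * of_int d)),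
     (1/(1-t), sqf ((t-1) * of_int d)), ((t-1)/t, sqf (-t * of_int d)), (1/t, sqf (t * of_int d))}"
    unfolding q using fiber_mem[OF p, of s e] by (simp only: mem_Collect_eq insert_iff empty_iff prod.inject fst_conv snd_conv simp_thms)
qed

lemma j1728:
  assumes p: "(t,d) \<in> G_idx" and j: "j_inv (fst (Etd t d)) (snd (Etd t d)) \<noteq> 1728"
  shows "2*t \<noteq> 1 \<and> t \<noteq> -1 \<and> t \<noteq> 2"
proof -
  have disc: "ec_disc (fst (Etd t d)) (snd (Etd t d)) \<noteq> 0" using p by (simp add: G_idx_def)
  have "snd (Etd t d) \<noteq> 0"
  proof
    assume B: "snd (Etd t d) = 0"
    hence "4 * (fst (Etd t d))^3 \<noteq> 0" using disc by (simp add: ec_disc_def)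
    hence "j_inv (fst (Etd t d)) (snd (Etd t d)) = 1728" using B by (simp add: j_inv_def)
    thus False using j by simp
  qed
  hence "gg t \<noteq> 0" by (simp add: Etd_def)
  moreover have "gg t = -27 * ((2*t-1)*((t+1)*(t-2)))" unfolding gg_def by algebra
  ultimately have "2*t-1 \<noteq> 0" "t+1 \<noteq> 0" "t-2 \<noteq> 0" by auto
  thus ?thesis by auto
qed

lemma part2:
  assumes p: "(t,d) \<in> G_idx" and j: "j_inv (fst (Etd t d)) (snd (Etd t d)) \<noteq> 1728"
  shows "card {q \<in> G_idx. iso_Q (Etd (fst q) (snd q)) (Etd t d)} = 6"
proof -
  have t0: "t \<noteq> 0" and t1: "t \<noteq> 1" using p by (auto simp: G_idx_iff)
  have "distinct [t, 1-t, t/(t-1), 1/(1-t), (t-1)/t, 1/t]"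
    using dist6 t0 t1 j1728[OF p j] by blast
  thus ?thesis unfolding fiber_eq[OF p] by (rule card6)
qed

lemma add_self_fix: "ec_add E P P = P \<Longrightarrow> P = Inf"
proof (cases P)
  case (Pt x y)
  assume h: "ec_add E P P = P"
  show ?thesis
  proof (cases "y = 0")
    case True thus ?thesis using h Pt by (simp add: ec_add_def)
  next
    case False
    define l where "l = (3 * x^2 + fst E) / (2 * y)"
    have "ec_add E P P = Pt (l^2 - x - x) (l * (x - (l^2 - x - x)) - y)"
      using Pt False by (simp add: ec_add_def Let_def l_def)
    hence "l^2 - x - x = x" "l * (x - (l^2 - x - x)) - y = y" using h Pt by auto
    hence "y = 0" by simp
    thus ?thesis using False by simp
  qed
qed simp

lemma add_self_inf: "ec_add E (Pt x y) (Pt x y) = Inf \<Longrightarrow> y = 0"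
  by (auto simp: ec_add_def Let_def split: if_splits)

lemma klein_pt:
  assumes inj: "inj \<phi>" and tors: "\<forall>a. tors_pt E (\<phi> a)"
    and hom: "\<forall>a b. \<phi> (klein_add a b) = ec_add E (\<phi> a) (\<phi> b)"
    and a: "a \<noteq> (False,False)"
  shows "\<exists>x. \<phi> a = Pt x 0 \<and> x^3 + fst E * x + snd E = 0"
proof -
  have "\<phi> (False,False) = ec_add E (\<phi> (False,False)) (\<phi> (False,False))"
    using hom[rule_format, of "(False,False)" "(False,False)"] by (simp add: klein_add_def)
  hence z: "\<phi> (False,False) = Inf" using add_self_fix by metis
  have "\<phi> (False,False) = ec_add E (\<phi> a) (\<phi> a)"
    using hom[rule_format, of a a] by (simp add: klein_add_def)
  hence aa: "ec_add E (\<phi> a) (\<phi> a) = Inf" using z by simp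
  have "\<phi> a \<noteq> Inf" using inj a z by (metis injD)
  then obtain x y where P: "\<phi> a = Pt x y" by (cases "\<phi> a") auto
  have y: "y = 0" using aa P add_self_inf by metis
  have "on_curve E (\<phi> a)" using tors[rule_format, of a] by (simp add: tors_pt_def)
  hence "x^3 + fst E * x + snd E = 0" using P y by (simp add: on_curve_def)
  thus ?thesis using P y by auto
qed

lemma klein_roots:
  assumes "klein_embeds_tors (A, B)"
  shows "\<exists>x1 x2 x3. x1 \<noteq> x2 \<and> x1 \<noteq> x3 \<and> x2 \<noteq> x3 \<and> x1^3 + A*x1 + B = 0
     \<and> x2^3 + A*x2 + B = 0 \<and> x3^3 + A*x3 + B = 0"
proof -
  obtain \<phi> where inj: "inj \<phi>" and tors: "\<forall>a. tors_pt (A,B) (\<phi> a)"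
    and hom: "\<forall>a b. \<phi> (klein_add a b) = ec_add (A,B) (\<phi> a) (\<phi> b)"
    using assms unfolding klein_embeds_tors_def by blast
  obtain x1 where 1: "\<phi> (True,False) = Pt x1 0" "x1^3 + A*x1 + B = 0"
    using klein_pt[OF inj tors hom, of "(True,False)"] by auto
  obtain x2 where 2: "\<phi> (False,True) = Pt x2 0" "x2^3 + A*x2 + B = 0"
    using klein_pt[OF inj tors hom, of "(False,True)"] by auto
  obtain x3 where 3: "\<phi> (True,True) = Pt x3 0" "x3^3 + A*x3 + B = 0"
    using klein_pt[OF inj tors hom, of "(True,True)"] by auto
  have "x1 \<noteq> x2" using 1 2 inj by (metis injD prod.inject)
  moreover have "x1 \<noteq> x3" using 1 3 inj by (metis injD prod.inject)
  moreover have "x2 \<noteq> x3" using 2 3 inj by (metis injD prod.inject)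
  ultimately show ?thesis using 1 2 3 by blast
qed

lemma roots_param:
  fixes A B x1 x2 x3 :: rat
  assumes d12: "x1 \<noteq> x2" and d13: "x1 \<noteq> x3" and d23: "x2 \<noteq> x3"
    and r1: "x1^3 + A*x1 + B = 0" and r2: "x2^3 + A*x2 + B = 0" and r3: "x3^3 + A*x3 + B = 0"
  shows "\<exists>p \<in> G_idx. iso_Q (A, B) (Etd (fst p) (snd p))"
proof -
  have "(x1-x2)*(x1^2+x1*x2+x2^2+A) = 0" using r1 r2 by algebra
  hence q12: "x1^2+x1*x2+x2^2+A = 0" using d12 by simp
  have "(x1-x3)*(x1^2+x1*x3+x3^2+A) = 0" using r1 r3 by algebra
  hence q13: "x1^2+x1*x3+x3^2+A = 0" using d13 by simp
  have "(x2-x3)*(x1+x2+x3) = 0" using q12 q13 by algebra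
  hence sum: "x3 = -x1-x2" using d23 by simp
  have A: "A = -(x1^2+x1*x2+x2^2)" using q12 by simp
  have B: "B = - (x1^3) - A*x1" using r1 by simp
  define D where "D = x3 - x2"
  have D0: "D \<noteq> 0" using d23 by (simp add: D_def)
  obtain v where v: "v \<noteq> 0" and Dv: "D = v^2 * of_int (sqf D)" and sd: "squarefree (sqf D)"
    using sqf_prop[OF D0] by auto
  define d where "d = sqf D"
  define t where "t = (x1 - x2) / D"
  have dD: "of_int d = D / v^2" using Dv v by (simp add: d_def field_simps)
  have t0: "t \<noteq> 0" using d12 D0 by (simp add: t_def)
  have t1: "t \<noteq> 1" using d13 D0 by (simp add: t_def D_def field_simps)
  have mem: "(t, d) \<in> G_idx" using sd t0 t1 by (simp add: G_idx_iff d_def)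
  have Dt: "D*t = x1-x2" using D0 by (simp add: t_def)
  have "D^2 * ff t = -27*((D*t)^2 - D*(D*t) + D^2)" unfolding ff_def by algebra
  also have "\<dots> = 81 * A" unfolding Dt unfolding A D_def sum by algebra
  finally have F: "D^2 * ff t = 81 * A" .
  have "D^3 * gg t = -27*(2*(D*t)^3 - 3*(D*t)^2*D - 3*(D*t)*D^2 + 2*D^3)" unfolding gg_def by algebra
  also have "\<dots> = 729 * B" unfolding Dt unfolding B A D_def sum by algebra
  finally have G: "D^3 * gg t = 729 * B" .
  have e1: "(of_int d)^2 * ff t = (3/v)^4 * A"
  proof -
    have "(of_int d)^2 * ff t = D^2 * ff t / v^4" unfolding dD using v by (simp add: power_divide field_simps)
    also have "\<dots> = (3/v)^4 * A" unfolding F by (simp add: power_divide)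
    finally show ?thesis .
  qed
  have e2: "(of_int d)^3 * gg t = (3/v)^6 * B"
  proof -
    have "(of_int d)^3 * gg t = D^3 * gg t / v^6" unfolding dD using v by (simp add: power_divide field_simps)
    also have "\<dots> = (3/v)^6 * B" unfolding G by (simp add: power_divide)
    finally show ?thesis .
  qed
  have "iso_Q (A, B) (Etd t d)" unfolding iso_Q_def Etd_def using e1 e2 v
    by (intro exI[of _ "3/v"]) simp
  thus ?thesis using mem by force
qed

theorem lemma6p3:
  shows "(\<forall>A B :: rat. ec_disc A B \<noteq> 0 \<and> klein_embeds_tors (A, B)
            \<and> j_inv A B \<noteq> 0 \<and> j_inv A B \<noteq> 1728
          \<longrightarrow> (\<exists>p \<in> G_idx. iso_Q (A, B) (Etd (fst p) (snd p))))
       \<and> (\<forall>p \<in> G_idx. j_inv (fst (Etd (fst p) (snd p))) (snd (Etd (fst p) (snd p))) \<noteq> 0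
            \<and> j_inv (fst (Etd (fst p) (snd p))) (snd (Etd (fst p) (snd p))) \<noteq> 1728
          \<longrightarrow> card {q \<in> G_idx. iso_Q (Etd (fst q) (snd q)) (Etd (fst p) (snd p))} = 6)"
proof (intro conjI allI impI ballI)
  fix A B :: rat
  assume "ec_disc A B \<noteq> 0 \<and> klein_embeds_tors (A, B) \<and> j_inv A B \<noteq> 0 \<and> j_inv A B \<noteq> 1728"
  then obtain x1 x2 x3 where "x1 \<noteq> x2" "x1 \<noteq> x3" "x2 \<noteq> x3" "x1^3 + A*x1 + B = 0"
     "x2^3 + A*x2 + B = 0" "x3^3 + A*x3 + B = 0" using klein_roots by blast
  thus "\<exists>p \<in> G_idx. iso_Q (A, B) (Etd (fst p) (snd p))" by (rule roots_param)
next
  fix p assume p: "p \<in> G_idx"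
    and j: "j_inv (fst (Etd (fst p) (snd p))) (snd (Etd (fst p) (snd p))) \<noteq> 0
            \<and> j_inv (fst (Etd (fst p) (snd p))) (snd (Etd (fst p) (snd p))) \<noteq> 1728"
  obtain t d where pt: "p = (t,d)" by (cases p)
  show "card {q \<in> G_idx. iso_Q (Etd (fst q) (snd q)) (Etd (fst p) (snd p))} = 6"
    using part2[of t d] p j unfolding pt by simp
qed

end
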